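(* For every automaton $\mathcal{A}$ and every integer $k\ge1$, the language $\mathfrak{J}_{\exists\boxplus}(\mathcal{A})$ is $k\boxplus$-invariant: if $w\in\mathfrak{J}_{\exists\boxplus}(\mathcal{A})$ and $w_1\sim_{k\boxplus}w$, then $w_1\in\mathfrak{J}_{\exists\boxplus}(\mathcal{A})$. Consequently, the $\omega$-regular language $\{(ab)^\omega\}$ over $\{a,b\}$ is not equal to $\mathfrak{J}_{\exists\boxplus}(\mathcal{B})$ for any automaton $\mathcal{B}$.
   Context: Automata are nondeterministic B\"uchi automata over infinite words; $\mathfrak{L}(\mathcal{A})$ is the accepted language. For finite $x$, $\Psi(x)$ is its Parikh image. For $k\ge1$, $w\sim_{k\boxplus}w'$ means $w=x_1x_2\cdots$, $w'=y_1y_2\cdots$ with $|x_i|=|y_i|=k$ and $\Psi(x_i)=\Psi(y_i)$ for all $i$. $\mathfrak{J}_{\exists\boxplus}(\mathcal{A})=\{w\in\Sigma^\omega:\exists k\ge1\ \exists w'\sim_{k\boxplus}w,\ w'\in\mathfrak{L}(\mathcal{A})\}$. *)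

theory Defs
  imports Main "HOL-Library.Multiset"
begin

record ('q, 'a) nba =
  alphabet :: "'a set"
  states :: "'q set"
  initial :: "'q set"
  trans :: "('q \<times> 'a \<times> 'q) set"
  accepting :: "'q set"

definition nba :: "('q, 'a) nba \<Rightarrow> bool" where
  "nba A \<longleftrightarrow> finite (alphabet A) \<and> alphabet A \<noteq> {} \<and> finite (states A)
     \<and> initial A \<subseteq> states A \<and> accepting A \<subseteq> states A
     \<and> trans A \<subseteq> states A \<times> alphabet A \<times> states A"

definition omega_words :: "'a set \<Rightarrow> (nat \<Rightarrow> 'a) set" where
  "omega_words S = {w. \<forall>i. w i \<in> S}"

definition accepting_run :: "('q, 'a) nba \<Rightarrow> (nat \<Rightarrow> 'a) \<Rightarrow> (nat \<Rightarrow> 'q) \<Rightarrow> bool" where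
  "accepting_run A w r \<longleftrightarrow> r 0 \<in> initial A
     \<and> (\<forall>i. (r i, w i, r (Suc i)) \<in> trans A)
     \<and> (\<exists>\<^sub>\<infinity> i. r i \<in> accepting A)"

definition lang :: "('q, 'a) nba \<Rightarrow> (nat \<Rightarrow> 'a) set" where
  "lang A = {w \<in> omega_words (alphabet A). \<exists>r. accepting_run A w r}"

definition parikh :: "'a list \<Rightarrow> 'a multiset" where
  "parikh x = mset x"

definition block :: "nat \<Rightarrow> (nat \<Rightarrow> 'a) \<Rightarrow> nat \<Rightarrow> 'a list" where
  "block k w i = map w [i * k..<(Suc i) * k]"

definition block_equiv :: "nat \<Rightarrow> (nat \<Rightarrow> 'a) \<Rightarrow> (nat \<Rightarrow> 'a) \<Rightarrow> bool" where
  "block_equiv k w w' \<longleftrightarrow> (\<forall>i. parikh (block k w i) = parikh (block k w' i))"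

definition J_exists_block :: "('q, 'a) nba \<Rightarrow> (nat \<Rightarrow> 'a) set" where
  "J_exists_block A = {w \<in> omega_words (alphabet A).
      \<exists>k\<ge>1. \<exists>w'. block_equiv k w' w \<and> w' \<in> lang A}"

end

theory Submission
  imports Defs
begin

lemma seg_equiv:
  assumes "block_equiv k u v"
  shows "mset (map u [j*k..<(j+n)*k]) = mset (map v [j*k..<(j+n)*k])"
proof (induction n)
  case 0 then show ?case by simp
next
  case (Suc n)
  have "[j*k..<(j+Suc n)*k] = [j*k..<(j+n)*k] @ [(j+n)*k..<Suc (j+n)*k]"
    using upt_add_eq_append[of "j*k" "(j+n)*k" k] by (simp add: algebra_simps)
  moreover have "mset (map u [(j+n)*k..<Suc (j+n)*k]) = mset (map v [(j+n)*k..<Suc (j+n)*k])"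
    using assms unfolding block_equiv_def block_def parikh_def by blast
  ultimately show ?case using Suc by simp
qed

lemma block_equiv_mult:
  assumes "block_equiv k u v"
  shows "block_equiv (k*m) u v"
  unfolding block_equiv_def block_def parikh_def
proof
  fix i
  have "[i * (k*m)..<Suc i * (k*m)] = [(i*m)*k..<(i*m+m)*k]"
    by (simp add: algebra_simps)
  then show "mset (map u [i * (k*m)..<Suc i * (k*m)]) = mset (map v [i * (k*m)..<Suc i * (k*m)])"
    using seg_equiv[OF assms] by simp
qed

lemma block_equiv_sym: "block_equiv k u v \<Longrightarrow> block_equiv k v u"
  unfolding block_equiv_def by simp

lemma block_equiv_trans: "block_equiv k u v \<Longrightarrow> block_equiv k v x \<Longrightarrow> block_equiv k u x"
  unfolding block_equiv_def by simp

lemma letters: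
  assumes "block_equiv k u v" "k \<ge> 1"
  shows "u n \<in> v ` UNIV"
proof -
  let ?i = "n div k"
  have "?i*k \<le> n" by (simp add: div_times_less_eq_dividend)
  moreover have "n < Suc ?i*k"
    using assms(2) by (metis add.commute div_mult_mod_eq mod_less_divisor mult_Suc
        nat_add_left_cancel_less not_one_le_zero neq0_conv)
  ultimately have "n \<in> set [?i*k..<Suc ?i*k]" by simp
  then have "u n \<in> set (block k u ?i)" unfolding block_def by simp
  also have "set (block k u ?i) = set (block k v ?i)"
    using assms(1) unfolding block_equiv_def parikh_def by (metis set_mset_mset)
  finally show ?thesis unfolding block_def by auto
qed

lemma part1:
  assumes k: "k \<ge> 1" and w: "w \<in> J_exists_block A" and e: "block_equiv k w1 w"
  shows "w1 \<in> J_exists_block A"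
proof -
  obtain k' w' where k': "k' \<ge> 1" "block_equiv k' w' w" "w' \<in> lang A"
    and wa: "w \<in> omega_words (alphabet A)"
    using w unfolding J_exists_block_def by blast
  have "block_equiv (k'*k) w' w" using block_equiv_mult[OF k'(2)] .
  moreover have "block_equiv (k*k') w1 w" using block_equiv_mult[OF e] .
  ultimately have "block_equiv (k'*k) w' w1"
    by (metis block_equiv_sym block_equiv_trans mult.commute)
  moreover have "k'*k \<ge> 1" using k k' by simp
  moreover have "w1 \<in> omega_words (alphabet A)"
  proof -
    { fix n obtain m where "w1 n = w m" using letters[OF e k, of n] by blast
      then have "w1 n \<in> alphabet A" using wa unfolding omega_words_def by simp }
    then show ?thesis unfolding omega_words_def by simp
  qed
  ultimately show ?thesis using k' unfolding J_exists_block_def by blast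
qed

theorem mainTheorem15:
  shows "(\<forall>(A :: ('q, 'a) nba) (k :: nat) w w1.
            nba A \<longrightarrow> k \<ge> 1 \<longrightarrow> w \<in> J_exists_block A \<longrightarrow> block_equiv k w1 w
            \<longrightarrow> w1 \<in> J_exists_block A)
       \<and> (\<forall>(a :: 'a) b (B :: ('q, 'a) nba).
            a \<noteq> b \<longrightarrow> nba B \<longrightarrow> alphabet B = {a, b}
            \<longrightarrow> J_exists_block B \<noteq> {\<lambda>i. if even i then a else b})"
proof (intro conjI allI impI)
  fix A :: "('q, 'a) nba" and k :: nat and w w1
  assume "k \<ge> 1" "w \<in> J_exists_block A" "block_equiv k w1 w"
  then show "w1 \<in> J_exists_block A" using part1 by blast
next
  fix a b :: 'a and B :: "('q, 'a) nba"
  assume ab: "a \<noteq> b"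
  show "J_exists_block B \<noteq> {\<lambda>i. if even i then a else b}"
  proof
    assume J: "J_exists_block B = {\<lambda>i. if even i then a else b}"
    let ?w = "\<lambda>i::nat. if even i then a else b"
    let ?v = "\<lambda>i::nat. if even i then b else a"
    have e: "block_equiv 2 ?v ?w"
      unfolding block_equiv_def block_def parikh_def
    proof
      fix i :: nat
      have "[i*2..<Suc i*2] = [2*i, Suc (2*i)]"
        by (simp add: upt_rec)
      then show "mset (map ?v [i * 2..<Suc i * 2]) = mset (map ?w [i * 2..<Suc i * 2])"
        by simp
    qed
    have "?v \<in> J_exists_block B" using part1[OF _ _ e, of B] J by simp
    with J have "?v = ?w" by simp
    then have "?v 0 = ?w 0" by metis
    then show False using ab by simp
  qed
qed

end
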